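(* Let $f$ be a nonzero polynomial whose multiset of reproducible zeros equals its full zero multiset, $R(f)=Z(f)$, and write $$R(f)=Z(f)=\{\underbrace{\beta_1,\dots,\beta_1}_{r_1},\dots,\underbrace{\beta_n,\dots,\beta_n}_{r_n}\}$$ with $\beta_1,\dots,\beta_n$ distinct. Then $$[f]=\Big(\operatorname{span}\big\{k_{\beta_j}^{(\ell)}:0\le\ell\le r_j-1,\ 1\le j\le n\big\}\Big)^{\perp}.$$
   Context: Standing assumptions: $\Omega\subset\mathbb C$ is a domain with $0\in\Omega$, $\mathcal H$ is a Hilbert space of analytic functions on $\Omega$ with bounded point evaluations at points of $\Omega$, the shift $(Sf)(z)=zf(z)$ is bounded on $\mathcal H$, and the polynomials $\mathcal P$ are dense in $\mathcal H$. For $g\in\mathcal H$, $[g]$ is the closure in $\mathcal H$ of $\operatorname{span}\{z^kg:k\ge0\}$. A point $\beta\in\mathbb C$ is reproducible of order $m\ge0$ if $p\mapsto p^{(m)}(\beta)$ on $\mathcal P$ extends to a bounded linear functional on $\mathcal H$; $k_\beta^{(m)}\in\mathcal H$ denotes the element representing this functional, $\langle g,k_\beta^{(m)}\rangle=g^{(m)}(\beta)$ (the value of the extension). $\beta$ is a reproducible point if reproducible of order $0$; reproducibility of order $m$ implies that of all orders $j\le m$; $\operatorname{ro}(\beta)\in\{0,1,\dots\}\cup\{\infty\}$ is the supremum of the orders of reproducibility. For a nonzero polynomial $p$: $Z(p)$ is its zero multiset (each zero listed with its multiplicity), and $R(p)$ is its multiset of reproducible zeros: each reproducible point $\beta$ at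 which $p$ has a zero of order $m\ge1$ is listed $\min\{m,\operatorname{ro}(\beta)+1\}$ times, and non-reproducible zeros are omitted. *)

theory Defs
  imports "HOL-Complex_Analysis.Complex_Analysis" "HOL-Computational_Algebra.Polynomial"
          "HOL-Library.Multiset" "HOL-Library.Extended_Nat"
begin

type_synonym cfun = "complex \<Rightarrow> complex"

text \<open>Elements of the Hilbert space are functions on \<Omega>, extended by 0 outside \<Omega>.
  The inner product ip is linear in the first argument.\<close>

definition hnorm :: "(cfun \<Rightarrow> cfun \<Rightarrow> complex) \<Rightarrow> cfun \<Rightarrow> real" where
  "hnorm ip f = sqrt (Re (ip f f))"

definition pfun :: "complex set \<Rightarrow> complex poly \<Rightarrow> cfun" where
  "pfun \<Omega> p = (\<lambda>z. if z \<in> \<Omega> then poly p z else 0)"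

definition is_hilbert_space :: "cfun set \<Rightarrow> (cfun \<Rightarrow> cfun \<Rightarrow> complex) \<Rightarrow> bool" where
  "is_hilbert_space H ip \<longleftrightarrow>
     (\<lambda>z. 0) \<in> H \<and>
     (\<forall>f\<in>H. \<forall>g\<in>H. (\<lambda>z. f z + g z) \<in> H) \<and>
     (\<forall>c. \<forall>f\<in>H. (\<lambda>z. c * f z) \<in> H) \<and>
     (\<forall>f\<in>H. \<forall>g\<in>H. \<forall>h\<in>H. ip (\<lambda>z. f z + g z) h = ip f h + ip g h) \<and>
     (\<forall>c. \<forall>f\<in>H. \<forall>g\<in>H. ip (\<lambda>z. c * f z) g = c * ip f g) \<and>
     (\<forall>f\<in>H. \<forall>g\<in>H. ip g f = cnj (ip f g)) \<and>
     (\<forall>f\<in>H. Im (ip f f) = 0 \<and> Re (ip f f) \<ge> 0) \<and>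
     (\<forall>f\<in>H. ip f f = 0 \<longrightarrow> f = (\<lambda>z. 0)) \<and>
     (\<forall>X. (\<forall>n. X n \<in> H) \<and>
          (\<forall>e>0. \<exists>N. \<forall>m\<ge>N. \<forall>n\<ge>N. hnorm ip (\<lambda>z. X m z - X n z) < e)
          \<longrightarrow> (\<exists>f\<in>H. (\<lambda>n. hnorm ip (\<lambda>z. X n z - f z)) \<longlonglongrightarrow> 0))"

definition std_space :: "complex set \<Rightarrow> cfun set \<Rightarrow> (cfun \<Rightarrow> cfun \<Rightarrow> complex) \<Rightarrow> bool" where
  "std_space \<Omega> H ip \<longleftrightarrow>
     open \<Omega> \<and> connected \<Omega> \<and> 0 \<in> \<Omega> \<and>
     is_hilbert_space H ip \<and>
     (\<forall>f\<in>H. f holomorphic_on \<Omega> \<and> (\<forall>z. z \<notin> \<Omega> \<longrightarrow> f z = 0)) \<and>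
     (\<forall>w\<in>\<Omega>. \<exists>C. \<forall>f\<in>H. cmod (f w) \<le> C * hnorm ip f) \<and>
     (\<forall>f\<in>H. (\<lambda>z. z * f z) \<in> H) \<and>
     (\<exists>C. \<forall>f\<in>H. hnorm ip (\<lambda>z. z * f z) \<le> C * hnorm ip f) \<and>
     (\<forall>p. pfun \<Omega> p \<in> H) \<and>
     (\<forall>f\<in>H. \<forall>e>0. \<exists>p. hnorm ip (\<lambda>z. f z - pfun \<Omega> p z) < e)"

definition hclosure :: "(cfun \<Rightarrow> cfun \<Rightarrow> complex) \<Rightarrow> cfun set \<Rightarrow> cfun set \<Rightarrow> cfun set" where
  "hclosure ip H S = {f \<in> H. \<forall>e>0. \<exists>s\<in>S. hnorm ip (\<lambda>z. f z - s z) < e}"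

definition cspan :: "cfun set \<Rightarrow> cfun set" where
  "cspan S = {g. \<exists>A c. finite A \<and> A \<subseteq> S \<and> g = (\<lambda>z. \<Sum>a\<in>A. c a * a z)}"

definition cyclic :: "(cfun \<Rightarrow> cfun \<Rightarrow> complex) \<Rightarrow> cfun set \<Rightarrow> cfun \<Rightarrow> cfun set" where
  "cyclic ip H g = hclosure ip H (cspan {(\<lambda>z. z ^ k * g z) | k. True})"

definition orth :: "(cfun \<Rightarrow> cfun \<Rightarrow> complex) \<Rightarrow> cfun set \<Rightarrow> cfun set \<Rightarrow> cfun set" where
  "orth ip H S = {g \<in> H. \<forall>k\<in>S. ip g k = 0}"

definition reproducible :: "complex set \<Rightarrow> cfun set \<Rightarrow> (cfun \<Rightarrow> cfun \<Rightarrow> complex) \<Rightarrow> complex \<Rightarrow> nat \<Rightarrow> bool" where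
  "reproducible \<Omega> H ip \<beta> m \<longleftrightarrow>
     (\<exists>L :: cfun \<Rightarrow> complex.
        (\<forall>f\<in>H. \<forall>g\<in>H. L (\<lambda>z. f z + g z) = L f + L g) \<and>
        (\<forall>c. \<forall>f\<in>H. L (\<lambda>z. c * f z) = c * L f) \<and>
        (\<exists>C. \<forall>f\<in>H. cmod (L f) \<le> C * hnorm ip f) \<and>
        (\<forall>p. L (pfun \<Omega> p) = poly ((pderiv ^^ m) p) \<beta>))"

definition ro :: "complex set \<Rightarrow> cfun set \<Rightarrow> (cfun \<Rightarrow> cfun \<Rightarrow> complex) \<Rightarrow> complex \<Rightarrow> enat" where
  "ro \<Omega> H ip \<beta> = Sup {enat m | m. reproducible \<Omega> H ip \<beta> m}"

text \<open>k_beta^(m): the element of H representing the functional (it is determined by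
  its values on the dense set of polynomials).\<close>
definition kernel :: "complex set \<Rightarrow> cfun set \<Rightarrow> (cfun \<Rightarrow> cfun \<Rightarrow> complex) \<Rightarrow> complex \<Rightarrow> nat \<Rightarrow> cfun" where
  "kernel \<Omega> H ip \<beta> m = (THE k. k \<in> H \<and> (\<forall>p. ip (pfun \<Omega> p) k = poly ((pderiv ^^ m) p) \<beta>))"

definition Zmset :: "complex poly \<Rightarrow> complex multiset" where
  "Zmset p = Abs_multiset (\<lambda>\<beta>. order \<beta> p)"

definition Rmset :: "complex set \<Rightarrow> cfun set \<Rightarrow> (cfun \<Rightarrow> cfun \<Rightarrow> complex) \<Rightarrow> complex poly \<Rightarrow> complex multiset" where
  "Rmset \<Omega> H ip p = Abs_multiset (\<lambda>\<beta>.
      if reproducible \<Omega> H ip \<beta> 0 \<and> order \<beta> p \<ge> 1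
      then the_enat (min (enat (order \<beta> p)) (ro \<Omega> H ip \<beta> + 1)) else 0)"

end

theory Submission
  imports Defs "HOL-Computational_Algebra.Polynomial_Factorial" "HOL-Computational_Algebra.Fundamental_Theorem_Algebra" "HOL-Computational_Algebra.Field_as_Ring"
begin


locale hsp = fixes H :: "cfun set" and ip :: "cfun \<Rightarrow> cfun \<Rightarrow> complex"
  assumes hs: "is_hilbert_space H ip"
begin

lemma zero_in: "(\<lambda>z. 0) \<in> H" using hs unfolding is_hilbert_space_def by blast
lemma add_in: "f \<in> H \<Longrightarrow> g \<in> H \<Longrightarrow> (\<lambda>z. f z + g z) \<in> H" using hs unfolding is_hilbert_space_def by blast
lemma scale_in: "f \<in> H \<Longrightarrow> (\<lambda>z. c * f z) \<in> H" using hs unfolding is_hilbert_space_def by blast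
lemma diff_in: assumes "f \<in> H" "g \<in> H" shows "(\<lambda>z. f z - g z) \<in> H"
proof -
  have "(\<lambda>z. f z + (\<lambda>z. (-1) * g z) z) \<in> H" using add_in scale_in assms by blast
  then show ?thesis by simp
qed
lemma ip_add_l: "f \<in> H \<Longrightarrow> g \<in> H \<Longrightarrow> h \<in> H \<Longrightarrow> ip (\<lambda>z. f z + g z) h = ip f h + ip g h"
  using hs unfolding is_hilbert_space_def by blast
lemma ip_scale_l: "f \<in> H \<Longrightarrow> g \<in> H \<Longrightarrow> ip (\<lambda>z. c * f z) g = c * ip f g"
  using hs unfolding is_hilbert_space_def by blast
lemma ip_sym: "f \<in> H \<Longrightarrow> g \<in> H \<Longrightarrow> ip g f = cnj (ip f g)"
  using hs unfolding is_hilbert_space_def by blast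
lemma ip_self: "f \<in> H \<Longrightarrow> Im (ip f f) = 0 \<and> Re (ip f f) \<ge> 0"
  using hs unfolding is_hilbert_space_def by blast
lemma ip_self_zero: "f \<in> H \<Longrightarrow> ip f f = 0 \<Longrightarrow> f = (\<lambda>z. 0)"
  using hs unfolding is_hilbert_space_def by blast
lemma complete: "(\<forall>n. X n \<in> H) \<Longrightarrow>
          (\<forall>e>0. \<exists>N. \<forall>m\<ge>N. \<forall>n\<ge>N. hnorm ip (\<lambda>z. X m z - X n z) < e)
          \<Longrightarrow> (\<exists>f\<in>H. (\<lambda>n. hnorm ip (\<lambda>z. X n z - f z)) \<longlonglongrightarrow> 0)"
  using hs unfolding is_hilbert_space_def by blast

lemma ip_add_r: "f \<in> H \<Longrightarrow> g \<in> H \<Longrightarrow> h \<in> H \<Longrightarrow> ip h (\<lambda>z. f z + g z) = ip h f + ip h g"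
  by (subst ip_sym, simp_all add: add_in ip_add_l) (metis ip_sym)
lemma ip_scale_r: "f \<in> H \<Longrightarrow> g \<in> H \<Longrightarrow> ip g (\<lambda>z. c * f z) = cnj c * ip g f"
  by (subst ip_sym, simp_all add: scale_in ip_scale_l) (metis ip_sym)
lemma ip_diff_l: assumes "f \<in> H" "g \<in> H" "h \<in> H" shows "ip (\<lambda>z. f z - g z) h = ip f h - ip g h"
proof -
  have m: "(\<lambda>z. (-1) * g z) \<in> H" using assms(2) by (rule scale_in)
  have "ip (\<lambda>z. f z + (\<lambda>z. (-1) * g z) z) h = ip f h + ip (\<lambda>z. (-1) * g z) h"
    using ip_add_l[OF assms(1) m assms(3)] .
  then show ?thesis using assms ip_scale_l[OF assms(2,3), of "-1"] by simp
qed
lemma ip_diff_r: assumes "f \<in> H" "g \<in> H" "h \<in> H" shows "ip h (\<lambda>z. f z - g z) = ip h f - ip h g"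
  using assms by (subst ip_sym, simp_all add: diff_in ip_diff_l) (metis ip_sym)
lemma ip_zero_l: "g \<in> H \<Longrightarrow> ip (\<lambda>z. 0) g = 0"
  using ip_scale_l[OF zero_in, of g 0] by simp
lemma ip_zero_r: "g \<in> H \<Longrightarrow> ip g (\<lambda>z. 0) = 0"
  using ip_sym[OF zero_in, of g] ip_zero_l by simp

lemma hnorm_nonneg: assumes "f \<in> H" shows "hnorm ip f \<ge> 0"
  unfolding hnorm_def by (rule real_sqrt_ge_zero) (use ip_self[OF assms] in blast)
lemma hnorm_sq: assumes "f \<in> H" shows "hnorm ip f ^ 2 = Re (ip f f)"
  unfolding hnorm_def by (rule real_sqrt_pow2) (use ip_self[OF assms] in blast)
lemma ip_self_eq: assumes "f \<in> H" shows "ip f f = complex_of_real (hnorm ip f ^ 2)"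
  unfolding hnorm_sq[OF assms] using ip_self[OF assms] by (simp add: complex_eq_iff)
lemma hnorm_zero_iff: assumes "f \<in> H" shows "hnorm ip f = 0 \<longleftrightarrow> f = (\<lambda>z. 0)"
proof
  assume "hnorm ip f = 0"
  then have "ip f f = 0" using ip_self_eq[OF assms] by simp
  then show "f = (\<lambda>z. 0)" using ip_self_zero[OF assms] by blast
next
  assume "f = (\<lambda>z. 0)"
  then have "ip f f = 0" using ip_zero_l zero_in by simp
  then show "hnorm ip f = 0" unfolding hnorm_def by simp
qed
lemma hnorm_zero: "hnorm ip (\<lambda>z. 0) = 0" using hnorm_zero_iff zero_in by blast

lemma cauchy_schwarz: assumes f: "f \<in> H" and g: "g \<in> H" shows "cmod (ip f g) \<le> hnorm ip f * hnorm ip g"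
proof (cases "hnorm ip g = 0")
  case True then have "g = (\<lambda>z. 0)" using g hnorm_zero_iff by blast
  then show ?thesis using ip_zero_r f hnorm_nonneg[OF f] hnorm_zero by simp
next
  case False
  define G where "G = hnorm ip g ^ 2"
  define F where "F = hnorm ip f ^ 2"
  define c where "c = ip f g"
  have Gp: "G > 0" using False hnorm_nonneg[OF g] unfolding G_def by simp
  define t where "t = c / complex_of_real G"
  define v where "v = (\<lambda>z. f z - t * g z)"
  have tg: "(\<lambda>z. t * g z) \<in> H" using g scale_in by blast
  have v: "v \<in> H" unfolding v_def using diff_in[OF f tg] .
  have "ip v v = ip f v - t * ip g v" unfolding v_def using ip_diff_l[OF f tg] diff_in[OF f tg] ip_scale_l[OF g] by (simp add: v_def[symmetric] v)
  also have "ip f v = ip f f - cnj t * ip f g" unfolding v_def using ip_diff_r[OF f tg f] ip_scale_r[OF g f] by simp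
  also have "ip g v = ip g f - cnj t * ip g g" unfolding v_def using ip_diff_r[OF f tg g] ip_scale_r[OF g g] by simp
  finally have "ip v v = F - cnj t * c - t * (cnj c - cnj t * G)"
    using ip_self_eq[OF f] ip_self_eq[OF g] ip_sym[OF f g] unfolding F_def G_def c_def by simp
  also have "\<dots> = F - c * cnj c / G" using Gp unfolding t_def by (simp add: field_simps)
  also have "c * cnj c = complex_of_real ((cmod c)^2)" by (simp add: complex_mult_cnj cmod_def)
  finally have "ip v v = complex_of_real (F - (cmod c)^2 / G)" by simp
  then have "F - (cmod c)^2 / G \<ge> 0" using ip_self[OF v] by simp
  then have "(cmod c)^2 \<le> F * G" using Gp by (simp add: field_simps)
  also have "F * G = (hnorm ip f * hnorm ip g)^2" unfolding F_def G_def by (simp add: power_mult_distrib)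
  finally have "(cmod c)^2 \<le> (hnorm ip f * hnorm ip g)^2" .
  from power2_le_imp_le[OF this mult_nonneg_nonneg[OF hnorm_nonneg[OF f] hnorm_nonneg[OF g]]]
  show ?thesis unfolding c_def .
qed

lemma ip_add_self: assumes "f \<in> H" "g \<in> H"
  shows "ip (\<lambda>z. f z + g z) (\<lambda>z. f z + g z) = ip f f + ip g g + ip f g + cnj (ip f g)"
  using assms by (simp add: ip_add_l ip_add_r add_in ip_sym[of f g])
lemma ip_diff_self: assumes "f \<in> H" "g \<in> H"
  shows "ip (\<lambda>z. f z - g z) (\<lambda>z. f z - g z) = ip f f + ip g g - ip f g - cnj (ip f g)"
  using assms by (simp add: ip_diff_l ip_diff_r diff_in ip_sym[of f g])

lemma hnorm_add: assumes f: "f \<in> H" and g: "g \<in> H" shows "hnorm ip (\<lambda>z. f z + g z) \<le> hnorm ip f + hnorm ip g"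
proof -
  have "hnorm ip (\<lambda>z. f z + g z) ^ 2 = hnorm ip f ^ 2 + hnorm ip g ^2 + 2 * Re (ip f g)"
    using hnorm_sq[OF add_in[OF f g]] ip_add_self[OF f g] hnorm_sq[OF f] hnorm_sq[OF g] by simp
  also have "Re (ip f g) \<le> hnorm ip f * hnorm ip g" using cauchy_schwarz[OF f g] complex_Re_le_cmod order_trans by blast
  then have "hnorm ip f ^ 2 + hnorm ip g ^2 + 2 * Re (ip f g) \<le> (hnorm ip f + hnorm ip g)^2"
    by (simp add: power2_sum)
  finally have "hnorm ip (\<lambda>z. f z + g z) ^ 2 \<le> (hnorm ip f + hnorm ip g)^2" .
  from power2_le_imp_le[OF this add_nonneg_nonneg[OF hnorm_nonneg[OF f] hnorm_nonneg[OF g]]]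
  show ?thesis .
qed

lemma parallelogram: assumes f: "f \<in> H" and g: "g \<in> H"
  shows "hnorm ip (\<lambda>z. f z + g z) ^ 2 + hnorm ip (\<lambda>z. f z - g z) ^ 2 = 2 * hnorm ip f ^ 2 + 2 * hnorm ip g ^ 2"
  using hnorm_sq[OF add_in[OF f g]] hnorm_sq[OF diff_in[OF f g]] ip_add_self[OF f g] ip_diff_self[OF f g]
    hnorm_sq[OF f] hnorm_sq[OF g] by simp

lemma hnorm_scale: assumes f: "f \<in> H" shows "hnorm ip (\<lambda>z. c * f z) = cmod c * hnorm ip f"
proof -
  have "hnorm ip (\<lambda>z. c * f z) ^ 2 = Re (c * cnj c * ip f f)"
    using hnorm_sq[OF scale_in[OF f]] ip_scale_l[OF f scale_in[OF f]] ip_scale_r[OF f f] by (simp add: mult.assoc)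
  also have "\<dots> = (cmod c * hnorm ip f)^2" using ip_self_eq[OF f]
    by (simp add: complex_mult_cnj cmod_def power_mult_distrib)
  finally show ?thesis using hnorm_nonneg[OF f] hnorm_nonneg[OF scale_in[OF f]]
    power2_eq_iff_nonneg[OF hnorm_nonneg[OF scale_in[OF f]] mult_nonneg_nonneg[OF norm_ge_zero hnorm_nonneg[OF f]]] by simp
qed

lemma hnorm_diff_sym: assumes "f \<in> H" "g \<in> H" shows "hnorm ip (\<lambda>z. f z - g z) = hnorm ip (\<lambda>z. g z - f z)"
proof -
  have "(\<lambda>z. g z - f z) = (\<lambda>z. (-1) * (\<lambda>z. f z - g z) z)" by auto
  then show ?thesis using hnorm_scale[OF diff_in[OF assms], of "-1"] by simp
qed

lemma hnorm_tri: assumes "f \<in> H" "g \<in> H" "h \<in> H"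
  shows "hnorm ip (\<lambda>z. f z - h z) \<le> hnorm ip (\<lambda>z. f z - g z) + hnorm ip (\<lambda>z. g z - h z)"
proof -
  have "(\<lambda>z. f z - h z) = (\<lambda>z. (\<lambda>z. f z - g z) z + (\<lambda>z. g z - h z) z)" by auto
  then show ?thesis using hnorm_add[OF diff_in[OF assms(1,2)] diff_in[OF assms(2,3)]] by simp
qed

lemma ip_cont: assumes "x \<in> H" "y \<in> H" "k \<in> H"
  shows "cmod (ip x k - ip y k) \<le> hnorm ip (\<lambda>z. x z - y z) * hnorm ip k"
  using cauchy_schwarz[OF diff_in[OF assms(1,2)] assms(3)] ip_diff_l[OF assms] by simp

end


lemma hpderiv_zero[simp]: "(pderiv ^^ l) 0 = (0::'a::idom poly)"
  by (induction l) auto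

lemma hpderiv_diff: "(pderiv ^^ l) (p - q) = (pderiv ^^ l) p - (pderiv ^^ l) (q::'a::idom poly)"
  by (induction l) (auto simp: pderiv_diff)

lemma hd_zero:
  fixes p :: "complex poly"
  shows "l < order a p \<Longrightarrow> poly ((pderiv ^^ l) p) a = 0"
proof (induction l arbitrary: p)
  case 0
  then show ?case using order_root by fastforce
next
  case (Suc l)
  show ?case
  proof (cases "p = 0")
    case True then show ?thesis by simp
  next
    case False
    have "poly p a = 0" using Suc.prems order_root by fastforce
    then have "order a p = Suc (order a (pderiv p))" using order_pderiv False by blast
    then have "l < order a (pderiv p)" using Suc.prems by simp
    then show ?thesis using Suc.IH by (simp add: funpow_Suc_right del: funpow.simps)
  qed
qed

lemma hd_zero_dvd:
  fixes p :: "complex poly"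
  assumes "[:-a,1:] ^ r dvd p" "l < r"
  shows "poly ((pderiv ^^ l) p) a = 0"
proof -
  have "p = 0 \<or> r \<le> order a p" using assms(1) order_divides by blast
  then show ?thesis using hd_zero assms(2) by fastforce
qed

lemma hd_zero_conv:
  fixes p :: "complex poly"
  shows "(\<forall>l<r. poly ((pderiv ^^ l) p) a = 0) \<Longrightarrow> p = 0 \<or> r \<le> order a p"
proof (induction r arbitrary: p)
  case 0 then show ?case by simp
next
  case (Suc r)
  have pa: "poly p a = 0" using Suc.prems[rule_format, of 0] by simp
  have "\<forall>l<r. poly ((pderiv ^^ l) (pderiv p)) a = 0"
    using Suc.prems by (auto simp: funpow_Suc_right simp del: funpow.simps)
  then have D: "pderiv p = 0 \<or> r \<le> order a (pderiv p)" using Suc.IH by blast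
  show ?case
  proof (cases "p = 0")
    case True then show ?thesis by simp
  next
    case False
    show ?thesis
    proof (cases "pderiv p = 0")
      case True
      then have "degree p = 0" using pderiv_eq_0_iff by blast
      then obtain c where "p = [:c:]" using degree_eq_zeroE by blast
      then show ?thesis using pa by simp
    next
      case F2: False
      then show ?thesis using D order_pderiv[OF False pa] by simp
    qed
  qed
qed

lemma order_dvd:
  fixes f p :: "complex poly"
  assumes "f \<noteq> 0" "\<forall>a. order a f \<le> order a p"
  shows "f dvd p"
  using assms
proof (induction "degree f" arbitrary: f p rule: less_induct)
  case less
  show ?case
  proof (cases "degree f = 0")
    case True
    then obtain c where c: "f = [:c:]" using degree_eq_zeroE by blast
    then have "c \<noteq> 0" using less.prems by simp
    then have "p = f * smult (1/c) p" using c by simp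
    then show ?thesis by (metis dvd_triv_left)
  next
    case False
    then have "\<not> constant (poly f)" using constant_degree[of f] by simp
    then obtain a where "poly f a = 0"
      using fundamental_theorem_of_algebra by blast
    then obtain f1 where f1: "f = [:-a,1:] * f1" using poly_eq_0_iff_dvd by (metis dvdE)
    have f1z: "f1 \<noteq> 0" using f1 less.prems by auto
    have of: "order b f = order b [:-a,1:] + order b f1" for b
      using f1 less.prems(1) order_mult by metis
    show ?thesis
    proof (cases "p = 0")
      case True then show ?thesis by simp
    next
      case pz: False
      have "order a f \<ge> 1" using of[of a] by (simp add: order_power_n_n[of a 1, simplified])
      then have "order a p \<ge> 1" using less.prems(2) order_trans by blast
      then have "poly p a = 0" using order_root by fastforce
      then obtain p1 where p1: "p = [:-a,1:] * p1" using poly_eq_0_iff_dvd by (metis dvdE)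
      have op: "order b p = order b [:-a,1:] + order b p1" for b
        using p1 pz order_mult by metis
      have nz: "[:-a,1:] \<noteq> (0::complex poly)" by simp
      have "degree f = degree [:-a,1:] + degree f1" using degree_mult_eq[OF nz f1z] f1 by (simp only:)
      then have "degree f = degree f1 + 1" by simp
      then have "degree f1 < degree f" by simp
      moreover have "\<forall>b. order b f1 \<le> order b p1" using of op less.prems(2)
        by (metis add_le_cancel_left)
      ultimately have "f1 dvd p1" using less.hyps f1z by blast
      then show ?thesis unfolding f1 p1 by (rule mult_dvd_mono[OF dvd_refl])
    qed
  qed
qed

lemma leibniz_gen:
  fixes p q :: "complex poly"
  assumes d1: "pderiv q = 1"
  shows "(pderiv ^^ m) (q * p) = q * (pderiv ^^ m) p + smult (of_nat m) ((pderiv ^^ (m - 1)) p)"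
proof (induction m)
  case 0 then show ?case by simp
next
  case (Suc m)
  show ?case
  proof (cases m)
    case 0 then show ?thesis by (simp add: pderiv_mult d1)
  next
    case (Suc k)
    have "(pderiv ^^ Suc m) (q * p) = pderiv ((pderiv ^^ m) (q * p))" by simp
    also have "\<dots> = (pderiv ^^ m) p + q * (pderiv ^^ Suc m) p + smult (of_nat m) ((pderiv ^^ m) p)"
      unfolding Suc.IH using Suc by (simp add: pderiv_mult pderiv_add pderiv_smult d1 algebra_simps)
    also have "\<dots> = q * (pderiv ^^ Suc m) p + smult (of_nat (Suc m)) ((pderiv ^^ (Suc m - 1)) p)"
      by (simp add: algebra_simps smult_add_left)
    finally show ?thesis .
  qed
qed

lemma d1lin: "pderiv [:-b,1:] = (1::complex poly)" by (simp add: pderiv_pCons)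

lemma leibniz_eval:
  fixes p :: "complex poly"
  shows "poly ((pderiv ^^ Suc m) ([:-b,1:] * p)) b = of_nat (Suc m) * poly ((pderiv ^^ m) p) b"
  unfolding leibniz_gen[OF d1lin] by simp

lemma hpderiv_power_gen:
  fixes q :: "complex poly"
  assumes d1: "pderiv q = 1"
  shows "(pderiv ^^ m) (q ^ l) = smult (of_nat (\<Prod>i<m. l - i)) (q ^ (l - m))"
proof (induction m)
  case 0 then show ?case by simp
next
  case (Suc m)
  show ?case
  proof (cases "l - m")
    case 0
    then have "l - Suc m = 0" by simp
    then show ?thesis using 0 Suc.IH by (simp add: pderiv_smult)
  next
    case (Suc k)
    then have e: "l - Suc m = k" by simp
    have "(pderiv ^^ Suc m) (q ^ l) = smult (of_nat (\<Prod>i<m. l - i)) (pderiv (q ^ Suc k))"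
      using Suc.IH Suc by (simp add: pderiv_smult)
    also have "\<dots> = smult (of_nat (\<Prod>i<m. l - i) * of_nat (Suc k)) (q ^ k)"
      by (simp only: pderiv_power_Suc d1 mult_1_right smult_smult)
    also have "of_nat (\<Prod>i<m. l - i) * of_nat (Suc k) = (of_nat (\<Prod>i<Suc m. l - i) :: complex)"
      using Suc by (simp only: prod.lessThan_Suc of_nat_mult)
    finally show ?thesis using e by simp
  qed
qed

lemma hpderiv_lin_power:
  "(pderiv ^^ m) ([:-a,1:] ^ l) = smult (of_nat (\<Prod>i<m. l - i)) ([:-a,1::complex:] ^ (l - m))"
  by (rule hpderiv_power_gen[OF d1lin])

lemma taylor_val: "poly ((pderiv ^^ m) ([:-a,1:] ^ l)) a =
   (if m = l then of_nat (\<Prod>i<l. l - i) else (0::complex))"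
proof -
  have "m > l \<Longrightarrow> (\<Prod>i<m. l - i) = 0"
    by (rule prod_zero) auto
  then show ?thesis unfolding hpderiv_lin_power by (auto simp: zero_power)
qed

lemma taylor_nz: "of_nat (\<Prod>i<l. l - i) \<noteq> (0::complex)"
  by (simp add: prod_zero_iff)

lemma taylor_exists:
  fixes d :: "nat \<Rightarrow> complex"
  shows "\<exists>T. \<forall>m<r. poly ((pderiv ^^ m) T) a = d m"
proof -
  define c where "c l = (of_nat (\<Prod>i<l. l - i) :: complex)" for l
  define T where "T = (\<Sum>l<r. smult (d l / c l) ([:-a,1:] ^ l))"
  have "poly ((pderiv ^^ m) T) a = d m" if "m < r" for m
  proof -
    have "poly ((pderiv ^^ m) T) a = (\<Sum>l<r. d l / c l * poly ((pderiv ^^ m) ([:-a,1:] ^ l)) a)"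
      unfolding T_def higher_pderiv_sum by (simp add: higher_pderiv_smult poly_sum)
    also have "\<dots> = (\<Sum>l<r. if l = m then d m else 0)"
      by (rule sum.cong) (auto simp: taylor_val c_def taylor_nz)
    also have "\<dots> = d m" using that by simp
    finally show ?thesis .
  qed
  then show ?thesis by blast
qed


lemma data_add: "poly ((pderiv ^^ l) (A + B)) x = poly ((pderiv ^^ l) A) x + poly ((pderiv ^^ l) (B::complex poly)) x"
  by (simp add: higher_pderiv_add)

lemma interp:
  fixes \<beta> :: "nat \<Rightarrow> complex" and r :: "nat \<Rightarrow> nat" and d :: "nat \<Rightarrow> nat \<Rightarrow> complex"
  shows "inj_on \<beta> {1..n} \<Longrightarrow> \<exists>h. \<forall>j\<in>{1..n}. \<forall>l<r j. poly ((pderiv ^^ l) h) (\<beta> j) = d j l"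
proof (induction n)
  case 0 then show ?case by auto
next
  case (Suc n)
  have "inj_on \<beta> {1..n}" using Suc.prems by (rule inj_on_subset) auto
  then obtain h0 where h0: "\<forall>j\<in>{1..n}. \<forall>l<r j. poly ((pderiv ^^ l) h0) (\<beta> j) = d j l"
    using Suc.IH by blast
  define a where "a = \<beta> (Suc n)"
  define R where "R = [:-a,1:] ^ r (Suc n)"
  define Q where "Q = (\<Prod>j\<in>{1..n}. [:-\<beta> j,1:] ^ r j)"
  obtain T where T: "\<forall>m<r (Suc n). poly ((pderiv ^^ m) T) a = d (Suc n) m"
    using taylor_exists by blast
  have ne: "\<beta> j \<noteq> a" if "j \<in> {1..n}" for j
  proof
    assume "\<beta> j = a"
    then have "j = Suc n" using inj_onD[OF Suc.prems, of j "Suc n"] that unfolding a_def by simp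
    then show False using that by simp
  qed
  have Qa: "poly Q a \<noteq> 0" unfolding Q_def poly_prod using ne by (force simp add: prod_zero_iff)
  have nd: "\<not> [:-a,1:] dvd Q" using Qa poly_eq_0_iff_dvd by blast
  have pe: "prime_elem [:-a,1::complex:]" by (rule prime_elem_linear_field_poly) simp
  have "coprime [:-a,1:] Q" by (rule prime_elem_imp_coprime[OF pe nd])
  then have "coprime R Q" unfolding R_def coprime_power_left_iff by blast
  then have g1: "gcd R Q = 1" by (simp add: coprime_iff_gcd_eq_1)
  define v where "v = fst (bezout_coefficients R Q)"
  define u where "u = snd (bezout_coefficients R Q)"
  have bz: "v * R + u * Q = 1" using bezout_coefficients_fst_snd[of R Q] g1 unfolding u_def v_def by simp
  define h where "h = h0 + (T - h0) * u * Q"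
  have hT: "h = T + (h0 - T) * v * R"
  proof -
    have "h = h0 + (T - h0) * (u * Q)" unfolding h_def by (simp add: mult.assoc)
    also have "u * Q = 1 - v * R" using bz by (simp add: algebra_simps)
    finally show ?thesis by (simp add: algebra_simps)
  qed
  have "poly ((pderiv ^^ l) h) (\<beta> j) = d j l" if j: "j \<in> {1..Suc n}" and l: "l < r j" for j l
  proof (cases "j = Suc n")
    case True
    have "R dvd (h0 - T) * v * R" by (rule dvd_triv_right)
    then have "poly ((pderiv ^^ l) ((h0 - T) * v * R)) a = 0"
      using hd_zero_dvd l True unfolding R_def by blast
    then show ?thesis unfolding hT data_add using T l True a_def by simp
  next
    case False
    then have j': "j \<in> {1..n}" using j by auto
    have "[:-\<beta> j,1:] ^ r j dvd Q" unfolding Q_def using j' by (intro dvd_prodI) auto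
    then have "[:-\<beta> j,1:] ^ r j dvd (T - h0) * u * Q" by (rule dvd_mult)
    then have "poly ((pderiv ^^ l) ((T - h0) * u * Q)) (\<beta> j) = 0"
      using hd_zero_dvd l by blast
    then show ?thesis unfolding h_def data_add using h0 j' l by simp
  qed
  then show ?case by blast
qed


context hsp begin

lemma riesz:
  assumes ladd: "\<forall>f\<in>H. \<forall>g\<in>H. L (\<lambda>z. f z + g z) = L f + L g"
    and lsc: "\<forall>c. \<forall>f\<in>H. L (\<lambda>z. c * f z) = c * L f"
    and bnd: "\<exists>C. \<forall>f\<in>H. cmod (L f) \<le> C * hnorm ip f"
  shows "\<exists>k\<in>H. \<forall>x\<in>H. L x = ip x k"
proof -
  obtain C0 where C0: "\<forall>f\<in>H. cmod (L f) \<le> C0 * hnorm ip f" using bnd by blast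
  define C where "C = max C0 0"
  have C: "cmod (L f) \<le> C * hnorm ip f" if "f \<in> H" for f
    using C0 that hnorm_nonneg[OF that] unfolding C_def
    by (meson max.cobounded1 mult_right_mono order_trans)
  have Cnn: "C \<ge> 0" unfolding C_def by simp
  have ladd': "L (\<lambda>z. f z + g z) = L f + L g" if "f \<in> H" "g \<in> H" for f g
    using ladd that by blast
  have lsc': "L (\<lambda>z. c * f z) = c * L f" if "f \<in> H" for f c
    using lsc that by blast
  have L0: "L (\<lambda>z. 0) = 0" using lsc'[OF zero_in, of 0] by simp
  have Ldiff: "L (\<lambda>z. f z - g z) = L f - L g" if "f \<in> H" "g \<in> H" for f g
  proof -
    have m: "(\<lambda>z. (-1) * g z) \<in> H" using that(2) by (rule scale_in)
    have "L (\<lambda>z. f z + (\<lambda>z. (-1) * g z) z) = L f + L (\<lambda>z. (-1) * g z)"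
      by (rule ladd'[OF that(1) m])
    moreover have "L (\<lambda>z. (-1) * g z) = (-1) * L g" by (rule lsc'[OF that(2)])
    ultimately show ?thesis by simp
  qed
  show ?thesis
  proof (cases "\<forall>x\<in>H. L x = 0")
    case True
    then show ?thesis using zero_in ip_zero_r by auto
  next
    case False
    then obtain u where u: "u \<in> H" "L u \<noteq> 0" by blast
    define A where "A = {y \<in> H. L y = 1}"
    have u1: "(\<lambda>z. (1 / L u) * u z) \<in> A" unfolding A_def using u scale_in[OF u(1), of "1 / L u"] lsc'[OF u(1), of "1 / L u"] by simp
    define d where "d = Inf (hnorm ip ` A)"
    have bdd: "bdd_below (hnorm ip ` A)" unfolding A_def using hnorm_nonneg
      by (intro bdd_belowI[of _ 0]) auto
    have dle: "d \<le> hnorm ip y" if "y \<in> A" for y unfolding d_def using bdd that by (simp add: cInf_lower)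
    have dnn: "d \<ge> 0" unfolding d_def using u1 hnorm_nonneg unfolding A_def
      by (intro cInf_greatest) auto
    have "\<exists>y. y \<in> A \<and> hnorm ip y < d + 1 / (real m + 1)" for m
    proof -
      have lt: "Inf (hnorm ip ` A) < d + 1 / (real m + 1)" unfolding d_def by simp
      have ne: "hnorm ip ` A \<noteq> {}" using u1 by blast
      from cInf_lessD[OF ne lt] obtain t where "t \<in> hnorm ip ` A" "t < d + 1 / (real m + 1)"
        by blast
      then show ?thesis by blast
    qed
    then have "\<forall>m. \<exists>y. y \<in> A \<and> hnorm ip y < d + 1 / (real m + 1)" by blast
    from choice[OF this] obtain X where X0: "\<forall>m. X m \<in> A \<and> hnorm ip (X m) < d + 1 / (real m + 1)" by blast
    have X: "\<And>m. X m \<in> A" "\<And>m. hnorm ip (X m) < d + 1 / (real m + 1)" using X0 by auto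
    have XH: "X m \<in> H" for m using X(1) unfolding A_def by blast
    have XL: "L (X m) = 1" for m using X(1) unfolding A_def by blast
    define K where "K = 2 * d + 1"
    have Kp: "K > 0" unfolding K_def using dnn by simp
    have sq: "hnorm ip (X m) ^ 2 \<le> d ^ 2 + K / (real m + 1)" for m
    proof -
      define \<delta> where "\<delta> = 1 / (real m + 1)"
      have dp: "0 < \<delta>" "\<delta> \<le> 1" unfolding \<delta>_def by (auto simp: field_simps)
      have "hnorm ip (X m) ^ 2 \<le> (d + \<delta>) ^ 2" using X(2)[of m] hnorm_nonneg[OF XH] unfolding \<delta>_def
        by (intro power_mono) auto
      also have "\<dots> = d^2 + 2 * d * \<delta> + \<delta> * \<delta>" by (simp add: power2_eq_square algebra_simps)
      also have "\<delta> * \<delta> \<le> \<delta>" using dp by (simp add: mult_le_one)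
      then have "d^2 + 2 * d * \<delta> + \<delta> * \<delta> \<le> d^2 + K * \<delta>" unfolding K_def by (simp add: algebra_simps)
      finally show ?thesis unfolding \<delta>_def by simp
    qed
    have mid: "hnorm ip (\<lambda>z. X m z + X m' z) ^ 2 \<ge> 4 * d ^ 2" for m m'
    proof -
      have s: "(\<lambda>z. X m z + X m' z) \<in> H" using XH add_in by blast
      have "(\<lambda>z. (1/2) * (\<lambda>z. X m z + X m' z) z) \<in> A"
        unfolding A_def using scale_in[OF s, of "1/2"] lsc'[OF s, of "1/2"] ladd'[OF XH XH, of m m'] XL by simp
      then have "d \<le> hnorm ip (\<lambda>z. (1/2) * (\<lambda>z. X m z + X m' z) z)" by (rule dle)
      also have "\<dots> = hnorm ip (\<lambda>z. X m z + X m' z) / 2" using hnorm_scale[OF s, of "1/2"] by simp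
      finally have "2 * d \<le> hnorm ip (\<lambda>z. X m z + X m' z)" by simp
      then have "(2 * d)^2 \<le> hnorm ip (\<lambda>z. X m z + X m' z) ^ 2" using dnn by (intro power_mono) auto
      then show ?thesis by (simp add: power_mult_distrib)
    qed
    have cau: "hnorm ip (\<lambda>z. X m z - X m' z) ^ 2 \<le> 2 * K / (real m + 1) + 2 * K / (real m' + 1)" for m m'
      using parallelogram[OF XH XH, of m m'] mid[of m m'] sq[of m] sq[of m'] by simp
    have "\<forall>e>0. \<exists>N. \<forall>m\<ge>N. \<forall>n\<ge>N. hnorm ip (\<lambda>z. X m z - X n z) < e"
    proof (intro allI impI)
      fix e :: real assume e: "e > 0"
      obtain N :: nat where N: "real N > 4 * K / e^2" using reals_Archimedean2 by blast
      have "4 * K / (real N + 1) < e ^ 2"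
      proof -
        have "4 * K < e^2 * real N" using N e by (simp add: field_simps)
        also have "\<dots> \<le> e^2 * (real N + 1)" using e by simp
        finally show ?thesis by (simp add: field_simps)
      qed
      have "hnorm ip (\<lambda>z. X m z - X n z) < e" if "m \<ge> N" "n \<ge> N" for m n
      proof -
        have a: "2 * K / (real m + 1) \<le> 2 * K / (real N + 1)" using that Kp by (intro divide_left_mono) auto
        have b: "2 * K / (real n + 1) \<le> 2 * K / (real N + 1)" using that Kp by (intro divide_left_mono) auto
        have "hnorm ip (\<lambda>z. X m z - X n z) ^ 2 < e ^ 2"
          using cau[of m n] a b \<open>4 * K / (real N + 1) < e ^ 2\<close> by simp
        then show ?thesis using e by (simp add: power_less_imp_less_base)
      qed
      then show "\<exists>N. \<forall>m\<ge>N. \<forall>n\<ge>N. hnorm ip (\<lambda>z. X m z - X n z) < e" by blast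
    qed
    then obtain w where w: "w \<in> H" and tl: "(\<lambda>n. hnorm ip (\<lambda>z. X n z - w z)) \<longlonglongrightarrow> 0"
      using complete[of X] XH by blast
    have Lw: "L w = 1"
    proof -
      have "cmod (1 - L w) \<le> C * hnorm ip (\<lambda>z. X n z - w z)" for n
        using C[OF diff_in[OF XH w]] Ldiff[OF XH w] XL by simp
      moreover have lim: "(\<lambda>n. C * hnorm ip (\<lambda>z. X n z - w z)) \<longlonglongrightarrow> 0"
        using tendsto_mult_left_zero[OF tl, of C] by (simp add: mult.commute)
      ultimately have "cmod (1 - L w) \<le> 0" using LIMSEQ_le_const[OF lim] by blast
      then show ?thesis by simp
    qed
    have wA: "w \<in> A" unfolding A_def using w Lw by blast
    have wmin: "hnorm ip w \<le> d"
    proof -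
      have "hnorm ip w \<le> d + 1 / (real n + 1) + hnorm ip (\<lambda>z. X n z - w z)" for n
      proof -
        have "w = (\<lambda>z. X n z + (\<lambda>z. w z - X n z) z)" by auto
        then have "hnorm ip w \<le> hnorm ip (X n) + hnorm ip (\<lambda>z. w z - X n z)"
          using hnorm_add[OF XH diff_in[OF w XH]] by metis
        also have "hnorm ip (\<lambda>z. w z - X n z) = hnorm ip (\<lambda>z. X n z - w z)"
          using hnorm_diff_sym[OF w XH] .
        finally show ?thesis using X(2)[of n] by simp
      qed
      moreover have lim: "(\<lambda>n. d + 1 / (real n + 1) + hnorm ip (\<lambda>z. X n z - w z)) \<longlonglongrightarrow> d + 0 + 0"
        using LIMSEQ_inverse_real_of_nat by (intro tendsto_add tendsto_const tl) (simp add: inverse_eq_divide add.commute)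
      ultimately have "hnorm ip w \<le> d + 0 + 0" using LIMSEQ_le_const[OF lim] by blast
      then show ?thesis by simp
    qed
    have orth: "ip z0 w = 0" if z0: "z0 \<in> H" "L z0 = 0" for z0
    proof -
      define c where "c = ip z0 w"
      define Z where "Z = hnorm ip z0 ^ 2"
      define W where "W = hnorm ip w ^ 2"
      define s where "s = 1 / (Z + 1)"
      have Zn: "Z \<ge> 0" unfolding Z_def by simp
      have sp: "s > 0" unfolding s_def using Zn by simp
      have sZ: "s * Z \<le> 1" unfolding s_def using Zn by (simp add: field_simps)
      define t where "t = - complex_of_real s * cnj c"
      have tz: "(\<lambda>z. t * z0 z) \<in> H" using scale_in z0 by blast
      have vA: "(\<lambda>z. w z + t * z0 z) \<in> A" unfolding A_def
        using add_in[OF w tz] ladd'[OF w tz] lsc'[OF z0(1), of t] z0 Lw by simp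
      have "W \<le> hnorm ip (\<lambda>z. w z + t * z0 z) ^ 2" unfolding W_def
        using wmin dle[OF vA] hnorm_nonneg[OF w] by (intro power_mono) auto
      also have "\<dots> = Re (ip (\<lambda>z. w z + t * z0 z) (\<lambda>z. w z + t * z0 z))"
        using hnorm_sq add_in[OF w tz] by blast
      also have "ip (\<lambda>z. w z + t * z0 z) (\<lambda>z. w z + t * z0 z) = ip w w + t * cnj t * ip z0 z0 + cnj t * cnj c + cnj (cnj t * cnj c)"
        using ip_add_self[OF w tz] ip_scale_l[OF z0(1) tz] ip_scale_r[OF z0(1) z0(1)] ip_scale_r[OF z0(1) w] ip_sym[OF z0(1) w]
        unfolding c_def by simp
      also have "Re \<dots> = W + s^2 * (cmod c)^2 * Z - 2 * s * (cmod c)^2"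
        using ip_self_eq[OF w] ip_self_eq[OF z0(1)] unfolding t_def W_def Z_def
        by (simp add: complex_mult_cnj cmod_def power2_eq_square algebra_simps)
      finally have "W \<le> W + s^2 * (cmod c)^2 * Z - 2 * s * (cmod c)^2" .
      moreover have "s^2 * (cmod c)^2 * Z \<le> s * (cmod c)^2"
      proof -
        have "s^2 * (cmod c)^2 * Z = (s * Z) * (s * (cmod c)^2)" by (simp add: power2_eq_square algebra_simps)
        also have "\<dots> \<le> 1 * (s * (cmod c)^2)" using sZ sp by (intro mult_right_mono) auto
        finally show ?thesis by simp
      qed
      ultimately have "s * (cmod c)^2 \<le> 0" by simp
      then have "(cmod c)^2 \<le> 0" using sp by (simp add: mult_le_0_iff)
      then show ?thesis unfolding c_def by simp
    qed
    define W where "W = hnorm ip w ^ 2"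
    have wnz: "W \<noteq> 0"
    proof
      assume "W = 0"
      then have "w = (\<lambda>z. 0)" using hnorm_zero_iff[OF w] unfolding W_def by simp
      then show False using Lw L0 by simp
    qed
    define k where "k = (\<lambda>z. complex_of_real (1 / W) * w z)"
    have kH: "k \<in> H" unfolding k_def using scale_in w by blast
    have "L x = ip x k" if x: "x \<in> H" for x
    proof -
      have lw: "(\<lambda>z. L x * w z) \<in> H" using scale_in w by blast
      have z0: "(\<lambda>z. x z - L x * w z) \<in> H" using diff_in[OF x lw] .
      have "L (\<lambda>z. x z - L x * w z) = 0" using Ldiff[OF x lw] lsc'[OF w, of "L x"] Lw by simp
      then have "ip (\<lambda>z. x z - L x * w z) w = 0" using orth z0 by blast
      then have "ip x w = L x * ip w w" using ip_diff_l[OF x lw w] ip_scale_l[OF w w] by simp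
      then have "ip x w = L x * complex_of_real W" using ip_self_eq[OF w] unfolding W_def by simp
      moreover have "ip x k = cnj (complex_of_real (1 / W)) * ip x w" unfolding k_def by (rule ip_scale_r[OF w x])
      ultimately show ?thesis using wnz by simp
    qed
    then show ?thesis using kH by blast
  qed
qed

end


lemma cspan_induct:
  assumes z: "(\<lambda>z. 0) \<in> T" and a: "\<And>f g. f \<in> T \<Longrightarrow> g \<in> T \<Longrightarrow> (\<lambda>z. f z + g z) \<in> T"
    and s: "\<And>c f. f \<in> T \<Longrightarrow> (\<lambda>z. c * f z) \<in> T" and S: "S \<subseteq> T"
  shows "cspan S \<subseteq> T"
proof
  fix g assume "g \<in> cspan S"
  then obtain A c where A: "finite A" "A \<subseteq> S" and g: "g = (\<lambda>z. \<Sum>a\<in>A. c a * a z)"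
    unfolding cspan_def by blast
  have "(\<lambda>z. \<Sum>a\<in>A. c a * a z) \<in> T" using A
  proof (induction A rule: finite_induct)
    case empty then show ?case using z by simp
  next
    case (insert b A)
    have "(\<lambda>z. (\<lambda>z. c b * b z) z + (\<lambda>z. \<Sum>a\<in>A. c a * a z) z) \<in> T"
      using insert S by (intro a s) auto
    then show ?case using insert by simp
  qed
  then show "g \<in> T" using g by simp
qed

lemma cspanI: "finite A \<Longrightarrow> A \<subseteq> S \<Longrightarrow> g = (\<lambda>z. \<Sum>a\<in>A. c a * a z) \<Longrightarrow> g \<in> cspan S"
  unfolding cspan_def by (rule CollectI, rule exI[of _ A], rule exI[of _ c]) simp

lemma cspan_gen: assumes "a \<in> S" shows "a \<in> cspan S"
proof -
  show ?thesis by (rule cspanI[of "{a}" S a "\<lambda>_. 1"]) (use assms in simp_all)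
qed

lemma cspan_zero: "(\<lambda>z. 0) \<in> cspan S"
proof -
  show ?thesis by (rule cspanI[of "{}" S _ "\<lambda>_. 1"]) simp_all
qed

lemma cspan_scale: "g \<in> cspan S \<Longrightarrow> (\<lambda>z. c * g z) \<in> cspan S"
proof -
  assume "g \<in> cspan S"
  then obtain A d where A: "finite A" "A \<subseteq> S" and g: "g = (\<lambda>z. \<Sum>a\<in>A. d a * a z)"
    unfolding cspan_def by blast
  have "(\<lambda>z. c * g z) = (\<lambda>z. \<Sum>a\<in>A. (\<lambda>a. c * d a) a * a z)" unfolding g by (simp add: sum_distrib_left mult.assoc)
  then show ?thesis using A by (intro cspanI[of A S _ "\<lambda>a. c * d a"]) simp_all
qed

lemma cspan_add: "f \<in> cspan S \<Longrightarrow> g \<in> cspan S \<Longrightarrow> (\<lambda>z. f z + g z) \<in> cspan S"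
proof -
  assume "f \<in> cspan S" "g \<in> cspan S"
  then obtain A1 c1 A2 c2 where A: "finite A1" "A1 \<subseteq> S" "finite A2" "A2 \<subseteq> S"
    and f: "f = (\<lambda>z. \<Sum>a\<in>A1. c1 a * a z)" and g: "g = (\<lambda>z. \<Sum>a\<in>A2. c2 a * a z)"
    unfolding cspan_def by blast
  define c where "c a = (if a \<in> A1 then c1 a else 0) + (if a \<in> A2 then c2 a else 0)" for a
  have "(\<lambda>z. f z + g z) = (\<lambda>z. \<Sum>a\<in>A1 \<union> A2. c a * a z)"
  proof
    fix z
    have fin: "finite (A1 \<union> A2)" using A by simp
    have "(\<Sum>a\<in>A1 \<union> A2. c a * a z) = (\<Sum>a\<in>A1 \<union> A2. if a \<in> A1 then c1 a * a z else 0) + (\<Sum>a\<in>A1 \<union> A2. if a \<in> A2 then c2 a * a z else 0)"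
      unfolding sum.distrib[symmetric] by (rule sum.cong) (auto simp: c_def distrib_right)
    also have "(\<Sum>a\<in>A1 \<union> A2. if a \<in> A1 then c1 a * a z else 0) = (\<Sum>a\<in>(A1 \<union> A2) \<inter> A1. c1 a * a z)"
      using sum.inter_restrict[OF fin, of "\<lambda>a. c1 a * a z" A1] by simp
    also have "(A1 \<union> A2) \<inter> A1 = A1" by blast
    also have "(\<Sum>a\<in>A1 \<union> A2. if a \<in> A2 then c2 a * a z else 0) = (\<Sum>a\<in>(A1 \<union> A2) \<inter> A2. c2 a * a z)"
      using sum.inter_restrict[OF fin, of "\<lambda>a. c2 a * a z" A2] by simp
    also have "(A1 \<union> A2) \<inter> A2 = A2" by blast
    finally show "f z + g z = (\<Sum>a\<in>A1 \<union> A2. c a * a z)" unfolding f g by simp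
  qed
  then show ?thesis using A by (intro cspanI[of "A1 \<union> A2" S _ c]) simp_all
qed

lemma pfun_mult_pCons: "pfun \<Omega> (f * pCons a q) = (\<lambda>z. a * pfun \<Omega> f z + z * pfun \<Omega> (f * q) z)"
  unfolding pfun_def by (auto simp: algebra_simps)

lemma cspan_shift:
  assumes "g \<in> cspan {(\<lambda>z. z ^ k * F z) | k. True}"
  shows "(\<lambda>z. z * g z) \<in> cspan {(\<lambda>z. z ^ k * F z) | k. True}"
proof -
  let ?G = "{(\<lambda>z. z ^ k * F z) | k. True}"
  have "cspan ?G \<subseteq> {s. (\<lambda>z. z * s z) \<in> cspan ?G}"
  proof (rule cspan_induct)
    show "(\<lambda>z. 0) \<in> {s. (\<lambda>z. z * s z) \<in> cspan ?G}" using cspan_zero by simp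
  next
    fix f g assume "f \<in> {s. (\<lambda>z. z * s z) \<in> cspan ?G}" "g \<in> {s. (\<lambda>z. z * s z) \<in> cspan ?G}"
    then have "(\<lambda>z. (\<lambda>z. z * f z) z + (\<lambda>z. z * g z) z) \<in> cspan ?G" using cspan_add by blast
    then show "(\<lambda>z. f z + g z) \<in> {s. (\<lambda>z. z * s z) \<in> cspan ?G}" by (simp add: algebra_simps)
  next
    fix c f assume "f \<in> {s. (\<lambda>z. z * s z) \<in> cspan ?G}"
    then have "(\<lambda>z. c * (\<lambda>z. z * f z) z) \<in> cspan ?G" using cspan_scale by blast
    then show "(\<lambda>z. c * f z) \<in> {s. (\<lambda>z. z * s z) \<in> cspan ?G}" by (simp add: algebra_simps)
  next
    show "?G \<subseteq> {s. (\<lambda>z. z * s z) \<in> cspan ?G}"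
    proof
      fix s assume "s \<in> ?G"
      then obtain k where s: "s = (\<lambda>z. z ^ k * F z)" by blast
      have "(\<lambda>z. z ^ Suc k * F z) \<in> ?G" by blast
      then have "(\<lambda>z. z ^ Suc k * F z) \<in> cspan ?G" by (rule cspan_gen)
      then show "s \<in> {s. (\<lambda>z. z * s z) \<in> cspan ?G}" unfolding s by (simp add: mult.assoc)
    qed
  qed
  then show ?thesis using assms by blast
qed

lemma pfun_mult_in_cspan: "pfun \<Omega> (f * q) \<in> cspan {(\<lambda>z. z ^ k * pfun \<Omega> f z) | k. True}"
proof (induction q)
  case 0
  have "pfun \<Omega> (f * 0) = (\<lambda>z. 0)" by (rule ext) (simp add: pfun_def)
  then show ?case by (simp only:) (rule cspan_zero)
next
  case (pCons a q)
  let ?G = "{(\<lambda>z. z ^ k * pfun \<Omega> f z) | k. True}"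
  have "(\<lambda>z. z ^ 0 * pfun \<Omega> f z) \<in> cspan ?G" by (rule cspan_gen) blast
  then have "pfun \<Omega> f \<in> cspan ?G" by simp
  then have a: "(\<lambda>z. a * pfun \<Omega> f z) \<in> cspan ?G" by (rule cspan_scale)
  have b: "(\<lambda>z. z * pfun \<Omega> (f * q) z) \<in> cspan ?G" by (rule cspan_shift[OF pCons.IH])
  show ?case unfolding pfun_mult_pCons by (rule cspan_add[OF a b])
qed

lemma cspan_pfun_mult: "cspan {(\<lambda>z. z ^ k * pfun \<Omega> f z) | k. True} \<subseteq> {pfun \<Omega> (f * q) | q. True}"
proof (rule cspan_induct)
  have "(\<lambda>z. 0) = pfun \<Omega> (f * 0)" by (rule ext) (simp add: pfun_def)
  then show "(\<lambda>z. 0) \<in> {pfun \<Omega> (f * q) | q. True}" by blast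
next
  fix g h assume "g \<in> {pfun \<Omega> (f * q) | q. True}" "h \<in> {pfun \<Omega> (f * q) | q. True}"
  then obtain q1 q2 where "g = pfun \<Omega> (f * q1)" "h = pfun \<Omega> (f * q2)" by blast
  then have "(\<lambda>z. g z + h z) = pfun \<Omega> (f * (q1 + q2))" by (auto simp: pfun_def algebra_simps)
  then show "(\<lambda>z. g z + h z) \<in> {pfun \<Omega> (f * q) | q. True}" by blast
next
  fix c g assume "g \<in> {pfun \<Omega> (f * q) | q. True}"
  then obtain q1 where "g = pfun \<Omega> (f * q1)" by blast
  then have "(\<lambda>z. c * g z) = pfun \<Omega> (f * smult c q1)" by (auto simp: pfun_def algebra_simps)
  then show "(\<lambda>z. c * g z) \<in> {pfun \<Omega> (f * q) | q. True}" by blast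
next
  show "{(\<lambda>z. z ^ k * pfun \<Omega> f z) | k. True} \<subseteq> {pfun \<Omega> (f * q) | q. True}"
  proof
    fix s assume "s \<in> {(\<lambda>z. z ^ k * pfun \<Omega> f z) | k. True}"
    then obtain k where s: "s = (\<lambda>z. z ^ k * pfun \<Omega> f z)" by blast
    have "s = pfun \<Omega> (f * monom 1 k)" unfolding s by (auto simp: pfun_def poly_monom)
    then show "s \<in> {pfun \<Omega> (f * q) | q. True}" by blast
  qed
qed

lemma eps_le: fixes a B :: real assumes "B \<ge> 0" "\<And>e. e > 0 \<Longrightarrow> a \<le> e * B" shows "a \<le> 0"
proof (rule ccontr)
  assume "\<not> a \<le> 0"
  then have a: "a > 0" by simp
  have p: "a / (B + 1) > 0" using a assms(1) by simp
  have "a \<le> (a / (B + 1)) * B" using assms(2)[OF p] .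
  also have "\<dots> < a" using a assms(1) by (simp add: field_simps)
  finally show False by simp
qed


context hsp begin

lemma hsum_in: "finite I \<Longrightarrow> (\<And>i. i \<in> I \<Longrightarrow> g i \<in> H) \<Longrightarrow> (\<lambda>z. \<Sum>i\<in>I. g i z) \<in> H"
proof (induction I rule: finite_induct)
  case empty then show ?case using zero_in by simp
next
  case (insert a I)
  have "(\<lambda>z. g a z + (\<lambda>z. \<Sum>i\<in>I. g i z) z) \<in> H" using insert by (intro add_in) auto
  then show ?case using insert by simp
qed

lemma hnorm_sum: "finite I \<Longrightarrow> (\<And>i. i \<in> I \<Longrightarrow> g i \<in> H) \<Longrightarrow> hnorm ip (\<lambda>z. \<Sum>i\<in>I. g i z) \<le> (\<Sum>i\<in>I. hnorm ip (g i))"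
proof (induction I rule: finite_induct)
  case empty then show ?case using hnorm_zero by simp
next
  case (insert a I)
  have s: "(\<lambda>z. \<Sum>i\<in>I. g i z) \<in> H" using insert hsum_in by blast
  have "hnorm ip (\<lambda>z. g a z + (\<lambda>z. \<Sum>i\<in>I. g i z) z) \<le> hnorm ip (g a) + hnorm ip (\<lambda>z. \<Sum>i\<in>I. g i z)"
    using insert s by (intro hnorm_add) auto
  then show ?case using insert by simp
qed

end

lemma std_hsp: "std_space \<Omega> H ip \<Longrightarrow> hsp H ip"
  unfolding std_space_def hsp_def by blast

lemma repr_down:
  assumes std: "std_space \<Omega> H ip" and rp: "reproducible \<Omega> H ip b (Suc m)"
  shows "reproducible \<Omega> H ip b m"
proof -
  interpret hsp H ip using std_hsp[OF std] .
  have shift: "\<And>f. f \<in> H \<Longrightarrow> (\<lambda>z. z * f z) \<in> H" using std unfolding std_space_def by blast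
  obtain CS where CS: "\<And>f. f \<in> H \<Longrightarrow> hnorm ip (\<lambda>z. z * f z) \<le> CS * hnorm ip f" using std unfolding std_space_def by blast
  obtain L where Ladd: "\<forall>f\<in>H. \<forall>g\<in>H. L (\<lambda>z. f z + g z) = L f + L g"
    and Lsc: "\<forall>c. \<forall>f\<in>H. L (\<lambda>z. c * f z) = c * L f"
    and Lb: "\<exists>C. \<forall>f\<in>H. cmod (L f) \<le> C * hnorm ip f"
    and Lp: "\<forall>p. L (pfun \<Omega> p) = poly ((pderiv ^^ Suc m) p) b"
    using rp unfolding reproducible_def by blast
  have ladd': "L (\<lambda>z. f z + g z) = L f + L g" if "f \<in> H" "g \<in> H" for f g using Ladd that by blast
  have lsc': "L (\<lambda>z. c * f z) = c * L f" if "f \<in> H" for f c using Lsc that by blast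
  obtain C0 where C0: "\<And>f. f \<in> H \<Longrightarrow> cmod (L f) \<le> C0 * hnorm ip f" using Lb by blast
  define C where "C = max C0 0"
  have C: "cmod (L f) \<le> C * hnorm ip f" if "f \<in> H" for f
  proof -
    have "C0 * hnorm ip f \<le> C * hnorm ip f" unfolding C_def using hnorm_nonneg[OF that] by (intro mult_right_mono) auto
    then show ?thesis using C0[OF that] by linarith
  qed
  have Cnn: "C \<ge> 0" unfolding C_def by simp
  define T where "T f = (\<lambda>z. z * f z - b * f z)" for f
  have TH: "T f \<in> H" if "f \<in> H" for f unfolding T_def using diff_in[OF shift[OF that] scale_in[OF that]] .
  define L' where "L' f = (1 / of_nat (Suc m)) * L (T f)" for f
  have "\<forall>f\<in>H. \<forall>g\<in>H. L' (\<lambda>z. f z + g z) = L' f + L' g"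
  proof (intro ballI)
    fix f g assume f: "f \<in> H" and g: "g \<in> H"
    have "T (\<lambda>z. f z + g z) = (\<lambda>z. T f z + T g z)" unfolding T_def by (auto simp: algebra_simps)
    then show "L' (\<lambda>z. f z + g z) = L' f + L' g" unfolding L'_def using ladd'[OF TH[OF f] TH[OF g]]
      by (simp add: algebra_simps)
  qed
  moreover have "\<forall>c. \<forall>f\<in>H. L' (\<lambda>z. c * f z) = c * L' f"
  proof (intro allI ballI)
    fix c f assume f: "f \<in> H"
    have "T (\<lambda>z. c * f z) = (\<lambda>z. c * T f z)" unfolding T_def by (auto simp: algebra_simps)
    then show "L' (\<lambda>z. c * f z) = c * L' f" unfolding L'_def using lsc'[OF TH[OF f], of c] by simp
  qed
  moreover have "\<exists>C. \<forall>f\<in>H. cmod (L' f) \<le> C * hnorm ip f"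
  proof (intro exI ballI)
    fix f assume f: "f \<in> H"
    have "hnorm ip (T f) \<le> hnorm ip (\<lambda>z. z * f z) + hnorm ip (\<lambda>z. (- b) * f z)"
    proof -
      have e: "T f = (\<lambda>z. z * f z + (- b) * f z)" unfolding T_def by (rule ext) simp
      show ?thesis unfolding e by (rule hnorm_add[OF shift[OF f] scale_in[OF f]])
    qed
    also have "\<dots> \<le> CS * hnorm ip f + cmod b * hnorm ip f" using CS[OF f] hnorm_scale[OF f, of "-b"] by simp
    finally have hT: "hnorm ip (T f) \<le> (CS + cmod b) * hnorm ip f" by (simp add: algebra_simps)
    have "cmod (L' f) = cmod (L (T f)) / real (Suc m)" unfolding L'_def by (simp add: norm_mult norm_divide norm_of_nat del: of_nat_Suc)
    also have "\<dots> \<le> C * hnorm ip (T f) / real (Suc m)" using C[OF TH[OF f]] by (simp add: divide_right_mono)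
    also have "\<dots> \<le> C * ((CS + cmod b) * hnorm ip f) / real (Suc m)"
      using hT Cnn by (intro divide_right_mono mult_left_mono) auto
    also have "\<dots> = (C * (CS + cmod b) / real (Suc m)) * hnorm ip f" by simp
    finally show "cmod (L' f) \<le> (C * (CS + cmod b) / real (Suc m)) * hnorm ip f" .
  qed
  moreover have "\<forall>p. L' (pfun \<Omega> p) = poly ((pderiv ^^ m) p) b"
  proof
    fix p
    have "T (pfun \<Omega> p) = pfun \<Omega> ([:-b,1:] * p)" unfolding T_def by (rule ext) (simp add: pfun_def algebra_simps)
    then have "L' (pfun \<Omega> p) = (1 / of_nat (Suc m)) * poly ((pderiv ^^ Suc m) ([:-b,1:] * p)) b"
      unfolding L'_def using Lp by simp
    also have "\<dots> = poly ((pderiv ^^ m) p) b" unfolding leibniz_eval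
      using of_nat_neq_0[of m, where 'a=complex] by (simp del: of_nat_Suc)
    finally show "L' (pfun \<Omega> p) = poly ((pderiv ^^ m) p) b" .
  qed
  ultimately show ?thesis unfolding reproducible_def by blast
qed

lemma repr_le:
  assumes std: "std_space \<Omega> H ip" and rp: "reproducible \<Omega> H ip b m" and lm: "l \<le> m"
  shows "reproducible \<Omega> H ip b l"
  using lm rp
proof (induction m)
  case 0 then show ?case by simp
next
  case (Suc m)
  show ?case
  proof (cases "l = Suc m")
    case True then show ?thesis using Suc by simp
  next
    case False
    then have "l \<le> m" using Suc by simp
    then show ?thesis using Suc.IH repr_down[OF std Suc.prems(2)] by blast
  qed
qed

lemma kernel_prop:
  assumes std: "std_space \<Omega> H ip" and rp: "reproducible \<Omega> H ip b m"
  shows "kernel \<Omega> H ip b m \<in> H \<and> (\<forall>p. ip (pfun \<Omega> p) (kernel \<Omega> H ip b m) = poly ((pderiv ^^ m) p) b)"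
proof -
  interpret hsp H ip using std_hsp[OF std] .
  have pH: "\<And>p. pfun \<Omega> p \<in> H" using std unfolding std_space_def by blast
  have dens: "\<And>f e. f \<in> H \<Longrightarrow> e > 0 \<Longrightarrow> \<exists>p. hnorm ip (\<lambda>z. f z - pfun \<Omega> p z) < e"
    using std unfolding std_space_def by blast
  obtain L where Ladd: "\<forall>f\<in>H. \<forall>g\<in>H. L (\<lambda>z. f z + g z) = L f + L g"
    and Lsc: "\<forall>c. \<forall>f\<in>H. L (\<lambda>z. c * f z) = c * L f"
    and Lb: "\<exists>C. \<forall>f\<in>H. cmod (L f) \<le> C * hnorm ip f"
    and Lp: "\<forall>p. L (pfun \<Omega> p) = poly ((pderiv ^^ m) p) b"
    using rp unfolding reproducible_def by blast
  obtain k where k: "k \<in> H" "\<forall>x\<in>H. L x = ip x k" using riesz[OF Ladd Lsc Lb] by blast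
  define P where "P k \<longleftrightarrow> k \<in> H \<and> (\<forall>p. ip (pfun \<Omega> p) k = poly ((pderiv ^^ m) p) b)" for k
  have Pk: "P k" unfolding P_def using k Lp pH by simp
  have uniq: "k2 = k" if "P k2" for k2
  proof -
    have k2: "k2 \<in> H" using that unfolding P_def by blast
    define e where "e = (\<lambda>z. k2 z - k z)"
    have eH: "e \<in> H" unfolding e_def using diff_in[OF k2 k(1)] .
    have ep: "ip (pfun \<Omega> p) e = 0" for p
      unfolding e_def using ip_diff_r[OF k2 k(1) pH] that Pk unfolding P_def by simp
    have "cmod (ip e e) \<le> 0"
    proof (rule eps_le[OF hnorm_nonneg[OF eH]])
      fix \<epsilon> :: real assume "\<epsilon> > 0"
      then obtain p where p: "hnorm ip (\<lambda>z. e z - pfun \<Omega> p z) < \<epsilon>" using dens[OF eH] by blast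
      have "cmod (ip e e) = cmod (ip e e - ip (pfun \<Omega> p) e)" using ep by simp
      also have "\<dots> \<le> hnorm ip (\<lambda>z. e z - pfun \<Omega> p z) * hnorm ip e" by (rule ip_cont[OF eH pH eH])
      also have "\<dots> \<le> \<epsilon> * hnorm ip e" using p hnorm_nonneg[OF eH] by (intro mult_right_mono) auto
      finally show "cmod (ip e e) \<le> \<epsilon> * hnorm ip e" .
    qed
    then have "ip e e = 0" by simp
    then have "e = (\<lambda>z. 0)" using ip_self_zero[OF eH] by blast
    then show ?thesis unfolding e_def by (auto simp: fun_eq_iff)
  qed
  have "P (THE k. P k)" by (rule theI[of P k, OF Pk uniq])
  then show ?thesis unfolding P_def kernel_def .
qed


lemma enat_aux: "the_enat (min (enat a) X) = a \<Longrightarrow> enat a \<le> X"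
  by (cases X) auto

lemma ro_exists:
  assumes r0: "reproducible \<Omega> H ip b 0" and le: "enat (Suc l) \<le> ro \<Omega> H ip b + 1"
  shows "\<exists>m\<ge>l. reproducible \<Omega> H ip b m"
proof (rule ccontr)
  assume "\<not> (\<exists>m\<ge>l. reproducible \<Omega> H ip b m)"
  then have lt: "\<And>m. reproducible \<Omega> H ip b m \<Longrightarrow> m < l" by (meson not_le)
  then have l1: "l \<ge> 1" using r0 by fastforce
  have "ro \<Omega> H ip b \<le> enat (l - 1)" unfolding ro_def
  proof (rule Sup_least)
    fix x assume "x \<in> {enat m | m. reproducible \<Omega> H ip b m}"
    then obtain m where "x = enat m" "reproducible \<Omega> H ip b m" by blast
    then show "x \<le> enat (l - 1)" using lt by fastforce
  qed
  then have "ro \<Omega> H ip b + 1 \<le> enat (l - 1) + 1" by (rule add_right_mono)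
  also have "enat (l - 1) + 1 = enat l" using l1 by (simp add: one_enat_def)
  finally have "enat (Suc l) \<le> enat l" using le by (meson order_trans)
  then show False by simp
qed


theorem mainTheorem5:
  fixes \<Omega> :: "complex set" and H :: "cfun set" and ip :: "cfun \<Rightarrow> cfun \<Rightarrow> complex"
    and f :: "complex poly" and n :: nat and \<beta> :: "nat \<Rightarrow> complex" and r :: "nat \<Rightarrow> nat"
  assumes "std_space \<Omega> H ip"
    and "f \<noteq> 0"
    and "Rmset \<Omega> H ip f = Zmset f"
    and "inj_on \<beta> {1..n}"
    and "\<forall>j\<in>{1..n}. r j \<ge> 1"
    and "Zmset f = (\<Sum>j\<in>{1..n}. replicate_mset (r j) (\<beta> j))"
  shows "cyclic ip H (pfun \<Omega> f) =
         orth ip H (cspan {kernel \<Omega> H ip (\<beta> j) l | j l. 1 \<le> j \<and> j \<le> n \<and> l \<le> r j - 1})"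
proof -
  note std = assms(1) and fnz = assms(2) and RZ = assms(3) and inj = assms(4) and rpos = assms(5) and Zs = assms(6)
  interpret hsp H ip using std_hsp[OF std] .
  have pH: "\<And>p. pfun \<Omega> p \<in> H" using std unfolding std_space_def by blast
  have dens: "\<And>g e. g \<in> H \<Longrightarrow> e > 0 \<Longrightarrow> \<exists>p. hnorm ip (\<lambda>z. g z - pfun \<Omega> p z) < e"
    using std unfolding std_space_def by blast
  have finZ: "finite {x. 0 < order x f}"
  proof (rule finite_subset[OF _ poly_roots_finite[OF fnz]])
    show "{x. 0 < order x f} \<subseteq> {x. poly f x = 0}" using order_root by auto
  qed
  have cntZ: "count (Zmset f) x = order x f" for x unfolding Zmset_def using count_Abs_multiset[OF finZ] by simp
  define Rf where "Rf \<beta>' = (if reproducible \<Omega> H ip \<beta>' 0 \<and> order \<beta>' f \<ge> 1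
      then the_enat (min (enat (order \<beta>' f)) (ro \<Omega> H ip \<beta>' + 1)) else 0)" for \<beta>'
  have finR: "finite {x. 0 < Rf x}"
    by (rule finite_subset[OF _ finZ]) (auto simp: Rf_def split: if_splits)
  have cntR: "count (Rmset \<Omega> H ip f) x = Rf x" for x
    unfolding Rmset_def Rf_def[symmetric] using count_Abs_multiset[OF finR] by simp
  have cntS: "order x f = (\<Sum>j\<in>{1..n}. if x = \<beta> j then r j else 0)" for x
    using cntZ[of x] unfolding Zs by (simp add: count_sum)
  have ordb: "order (\<beta> j) f = r j" if j: "j \<in> {1..n}" for j
  proof -
    have "order (\<beta> j) f = (\<Sum>i\<in>{1..n}. if i = j then r i else 0)"
      unfolding cntS by (rule sum.cong) (use inj j in \<open>auto simp: inj_on_eq_iff\<close>)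
    also have "\<dots> = r j" using j by simp
    finally show ?thesis .
  qed
  have ord0: "order x f = 0" if "x \<notin> \<beta> ` {1..n}" for x
    unfolding cntS using that by (auto intro!: sum.neutral)
  have rep: "reproducible \<Omega> H ip (\<beta> j) l" if j: "j \<in> {1..n}" and l: "l < r j" for j l
  proof -
    have "Rf (\<beta> j) = r j" using cntR[of "\<beta> j"] RZ cntZ[of "\<beta> j"] ordb[OF j] by simp
    moreover have "r j \<ge> 1" using rpos j by blast
    ultimately have c: "reproducible \<Omega> H ip (\<beta> j) 0"
      and e: "the_enat (min (enat (r j)) (ro \<Omega> H ip (\<beta> j) + 1)) = r j"
      unfolding Rf_def using ordb[OF j] by (auto split: if_splits)
    have "enat (r j) \<le> ro \<Omega> H ip (\<beta> j) + 1" using enat_aux[OF e] .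
    moreover have "enat (Suc l) \<le> enat (r j)" using l by simp
    ultimately have "enat (Suc l) \<le> ro \<Omega> H ip (\<beta> j) + 1" by (meson order_trans)
    then obtain m where "m \<ge> l" "reproducible \<Omega> H ip (\<beta> j) m" using ro_exists[OF c] by blast
    then show ?thesis using repr_le[OF std] by blast
  qed
  define K where "K j l = kernel \<Omega> H ip (\<beta> j) l" for j l
  have KH: "K j l \<in> H" and Kp: "\<And>p. ip (pfun \<Omega> p) (K j l) = poly ((pderiv ^^ l) p) (\<beta> j)"
    if "j \<in> {1..n}" "l < r j" for j l
    using kernel_prop[OF std rep[OF that]] unfolding K_def by blast+
  define S where "S = {kernel \<Omega> H ip (\<beta> j) l | j l. 1 \<le> j \<and> j \<le> n \<and> l \<le> r j - 1}"
  have Sdef: "S = {K j l | j l. j \<in> {1..n} \<and> l < r j}"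
  proof -
    have "(1 \<le> j \<and> j \<le> n \<and> l \<le> r j - 1) \<longleftrightarrow> (j \<in> {1..n} \<and> l < r j)" for j l
      using rpos[rule_format, of j] by auto
    then show ?thesis unfolding S_def K_def by simp
  qed
  define G where "G = {(\<lambda>z. z ^ k * pfun \<Omega> f z) | k. True}"
  show ?thesis unfolding S_def[symmetric]
  proof
    show "cyclic ip H (pfun \<Omega> f) \<subseteq> orth ip H (cspan S)"
    proof
      fix x assume "x \<in> cyclic ip H (pfun \<Omega> f)"
      then have x: "x \<in> H" and appr: "\<And>e. e > 0 \<Longrightarrow> \<exists>s\<in>cspan G. hnorm ip (\<lambda>z. x z - s z) < e"
        unfolding cyclic_def hclosure_def G_def by blast+
      have zK: "ip x (K j l) = 0" if j: "j \<in> {1..n}" and l: "l < r j" for j l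
      proof -
        have sK: "s \<in> H \<and> ip s (K j l) = 0" if s: "s \<in> cspan G" for s
        proof -
          obtain q where q: "s = pfun \<Omega> (f * q)" using cspan_pfun_mult s unfolding G_def by blast
          have "poly ((pderiv ^^ l) (f * q)) (\<beta> j) = 0"
          proof (cases "q = 0")
            case True then show ?thesis by simp
          next
            case False
            have "order (\<beta> j) (f * q) = order (\<beta> j) f + order (\<beta> j) q" using fnz False by (simp add: order_mult)
            then have "l < order (\<beta> j) (f * q)" using ordb[OF j] l by simp
            then show ?thesis by (rule hd_zero)
          qed
          then show ?thesis using q pH Kp[OF j l] by simp
        qed
        have "cmod (ip x (K j l)) \<le> 0"
        proof (rule eps_le[OF hnorm_nonneg[OF KH[OF j l]]])
          fix e :: real assume "e > 0"
          then obtain s where s: "s \<in> cspan G" "hnorm ip (\<lambda>z. x z - s z) < e" using appr by blast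
          have "cmod (ip x (K j l)) = cmod (ip x (K j l) - ip s (K j l))" using sK[OF s(1)] by simp
          also have "\<dots> \<le> hnorm ip (\<lambda>z. x z - s z) * hnorm ip (K j l)"
            using ip_cont[OF x _ KH[OF j l]] sK[OF s(1)] by blast
          also have "\<dots> \<le> e * hnorm ip (K j l)" using s(2) hnorm_nonneg[OF KH[OF j l]] by (intro mult_right_mono) auto
          finally show "cmod (ip x (K j l)) \<le> e * hnorm ip (K j l)" .
        qed
        then show ?thesis by simp
      qed
      have "cspan S \<subseteq> {s \<in> H. ip x s = 0}"
      proof (rule cspan_induct)
        show "(\<lambda>z. 0) \<in> {s \<in> H. ip x s = 0}" using zero_in ip_zero_r[OF x] by simp
      next
        fix g h assume "g \<in> {s \<in> H. ip x s = 0}" "h \<in> {s \<in> H. ip x s = 0}"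
        then show "(\<lambda>z. g z + h z) \<in> {s \<in> H. ip x s = 0}" using add_in ip_add_r[OF _ _ x] by simp
      next
        fix c g assume "g \<in> {s \<in> H. ip x s = 0}"
        then show "(\<lambda>z. c * g z) \<in> {s \<in> H. ip x s = 0}" using scale_in ip_scale_r[OF _ x] by simp
      next
        show "S \<subseteq> {s \<in> H. ip x s = 0}" unfolding Sdef using KH zK by auto
      qed
      then show "x \<in> orth ip H (cspan S)" unfolding orth_def using x by blast
    qed
  next
    show "orth ip H (cspan S) \<subseteq> cyclic ip H (pfun \<Omega> f)"
    proof
      fix x assume "x \<in> orth ip H (cspan S)"
      then have x: "x \<in> H" and xo: "\<And>k. k \<in> cspan S \<Longrightarrow> ip x k = 0" unfolding orth_def by blast+
      have xK: "ip x (K j l) = 0" if "j \<in> {1..n}" "l < r j" for j l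
        using xo[OF cspan_gen] that unfolding Sdef by blast
      define I where "I = Sigma {1..n} (\<lambda>j. {..<r j})"
      have finI: "finite I" unfolding I_def by simp
      have "\<forall>jl. \<exists>h. \<forall>j'\<in>{1..n}. \<forall>l'<r j'. poly ((pderiv ^^ l') h) (\<beta> j') = (if (j', l') = jl then 1 else 0)"
      proof
        fix jl :: "nat \<times> nat"
        show "\<exists>h. \<forall>j'\<in>{1..n}. \<forall>l'<r j'. poly ((pderiv ^^ l') h) (\<beta> j') = (if (j', l') = jl then 1 else 0)"
          using interp[OF inj, where r=r and d="\<lambda>j' l'. if (j', l') = jl then 1 else 0"] by simp
      qed
      from choice[OF this] obtain hb where hb0: "\<forall>jl. \<forall>j'\<in>{1..n}. \<forall>l'<r j'.
          poly ((pderiv ^^ l') (hb jl)) (\<beta> j') = (if (j', l') = jl then 1 else 0)"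
        by blast
      have hb: "\<And>jl j' l'. j' \<in> {1..n} \<Longrightarrow> l' < r j' \<Longrightarrow>
          poly ((pderiv ^^ l') (hb jl)) (\<beta> j') = (if (j', l') = jl then 1 else 0)"
        using hb0 by blast
      define KK where "KK i = K (fst i) (snd i)" for i
      have KKH: "KK i \<in> H" if "i \<in> I" for i using KH that unfolding KK_def I_def by auto
      define M where "M = 1 + (\<Sum>i\<in>I. hnorm ip (KK i) * hnorm ip (pfun \<Omega> (hb i)))"
      have Mge: "M \<ge> 1" unfolding M_def using KKH hnorm_nonneg pH by (auto intro!: sum_nonneg)
      have "\<exists>s\<in>cspan G. hnorm ip (\<lambda>z. x z - s z) < e" if e: "e > 0" for e
      proof -
        define \<delta> where "\<delta> = e / M"
        have dp: "\<delta> > 0" unfolding \<delta>_def using e Mge by simp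
        obtain p where p: "hnorm ip (\<lambda>z. x z - pfun \<Omega> p z) < \<delta>" using dens[OF x dp] by blast
        define c where "c i = poly ((pderiv ^^ snd i) p) (\<beta> (fst i))" for i
        define p' where "p' = p - (\<Sum>i\<in>I. smult (c i) (hb i))"
        have dat: "poly ((pderiv ^^ l') p') (\<beta> j') = 0" if j': "j' \<in> {1..n}" and l': "l' < r j'" for j' l'
        proof -
          have "poly ((pderiv ^^ l') p') (\<beta> j') = c (j', l') - (\<Sum>i\<in>I. c i * (if (j', l') = i then 1 else 0))"
            unfolding p'_def hpderiv_diff higher_pderiv_sum higher_pderiv_smult
            by (simp add: poly_sum hb[OF j' l'] c_def)
          also have "(\<Sum>i\<in>I. c i * (if (j', l') = i then 1 else 0)) = (\<Sum>i\<in>I. if (j', l') = i then c i else 0)"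
            by (rule sum.cong) auto
          also have "\<dots> = c (j', l')" using finI j' l' unfolding I_def by simp
          finally show ?thesis by simp
        qed
        have "f dvd p'"
        proof (cases "p' = 0")
          case True then show ?thesis by simp
        next
          case False
          have "order a f \<le> order a p'" for a
          proof (cases "a \<in> \<beta> ` {1..n}")
            case True
            then obtain j where j: "j \<in> {1..n}" "a = \<beta> j" by blast
            have "p' = 0 \<or> r j \<le> order (\<beta> j) p'" using dat[OF j(1)] hd_zero_conv by blast
            then show ?thesis using False ordb[OF j(1)] j(2) by simp
          next
            case False then show ?thesis using ord0 by simp
          qed
          then show ?thesis using order_dvd fnz by blast
        qed
        then obtain q where q: "p' = f * q" by blast
        define y where "y = pfun \<Omega> p'"
        have yG: "y \<in> cspan G" unfolding y_def q G_def by (rule pfun_mult_in_cspan)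
        have hbH: "pfun \<Omega> (hb i) \<in> H" for i using pH .
        have yeq: "(\<lambda>z. x z - y z) = (\<lambda>z. (\<lambda>z. x z - pfun \<Omega> p z) z + (\<lambda>z. \<Sum>i\<in>I. c i * pfun \<Omega> (hb i) z) z)"
          by (rule ext) (simp add: y_def p'_def pfun_def poly_sum sum_distrib_left)
        have s1: "(\<lambda>z. \<Sum>i\<in>I. c i * pfun \<Omega> (hb i) z) \<in> H"
          using hsum_in[OF finI, of "\<lambda>i z. c i * pfun \<Omega> (hb i) z"] scale_in[OF hbH] by blast
        have "hnorm ip (\<lambda>z. x z - y z) \<le> hnorm ip (\<lambda>z. x z - pfun \<Omega> p z) + hnorm ip (\<lambda>z. \<Sum>i\<in>I. c i * pfun \<Omega> (hb i) z)"
          unfolding yeq by (rule hnorm_add[OF diff_in[OF x pH] s1])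
        also have "hnorm ip (\<lambda>z. \<Sum>i\<in>I. c i * pfun \<Omega> (hb i) z) \<le> (\<Sum>i\<in>I. hnorm ip (\<lambda>z. c i * pfun \<Omega> (hb i) z))"
          using hnorm_sum[OF finI, of "\<lambda>i z. c i * pfun \<Omega> (hb i) z"] scale_in[OF hbH] by blast
        also have "\<dots> = (\<Sum>i\<in>I. cmod (c i) * hnorm ip (pfun \<Omega> (hb i)))"
          using hnorm_scale[OF hbH] by simp
        also have "\<dots> \<le> (\<Sum>i\<in>I. \<delta> * (hnorm ip (KK i) * hnorm ip (pfun \<Omega> (hb i))))"
        proof (rule sum_mono)
          fix i assume i: "i \<in> I"
          have "c i = ip (pfun \<Omega> p) (KK i)" unfolding c_def KK_def using Kp i unfolding I_def by auto
          moreover have "ip x (KK i) = 0" unfolding KK_def using xK i unfolding I_def by auto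
          ultimately have "cmod (c i) = cmod (ip x (KK i) - ip (pfun \<Omega> p) (KK i))" by simp
          also have "\<dots> \<le> hnorm ip (\<lambda>z. x z - pfun \<Omega> p z) * hnorm ip (KK i)" by (rule ip_cont[OF x pH KKH[OF i]])
          also have "\<dots> \<le> \<delta> * hnorm ip (KK i)" using p hnorm_nonneg[OF KKH[OF i]] by (intro mult_right_mono) auto
          finally have "cmod (c i) \<le> \<delta> * hnorm ip (KK i)" .
          then show "cmod (c i) * hnorm ip (pfun \<Omega> (hb i)) \<le> \<delta> * (hnorm ip (KK i) * hnorm ip (pfun \<Omega> (hb i)))"
            using hnorm_nonneg[OF hbH] by (simp add: mult.assoc[symmetric] mult_right_mono)
        qed
        also have "\<dots> = \<delta> * (M - 1)" unfolding M_def by (simp add: sum_distrib_left)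
        finally have "hnorm ip (\<lambda>z. x z - y z) < \<delta> + \<delta> * (M - 1)" using p by simp
        also have "\<delta> + \<delta> * (M - 1) = e" unfolding \<delta>_def using Mge by (simp add: field_simps)
        finally show ?thesis using yG by blast
      qed
      then show "x \<in> cyclic ip H (pfun \<Omega> f)" unfolding cyclic_def hclosure_def G_def[symmetric] using x by blast
    qed
  qed
qed


end
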